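(* Let $G$ be a finite abelian group and $\sim$ a nontrivial equivalence relation on $G - \{0\}$ such that for $x \neq y$, $x \sim y$ implies $(y-x) \sim (-x)$. Suppose $z \in G-\{0\}$ satisfies $z \sim (-z)$, and let $[z]$ denote its equivalence class. Then $[z] \cup \{0\}$ is a proper subgroup of $G$.
   Context: An equivalence relation is nontrivial if it has at least two classes. *)

theory Defs
  imports "HOL-Algebra.Algebra"
begin

end

theory Submission
  imports Defs
begin

theorem lemma3p14:
  fixes G (structure) and R :: "('a \<times> 'a) set" and z :: 'a
  assumes "comm_group G"
    and "finite (carrier G)"
    and "equiv (carrier G - {\<one>}) R"
    and "card ((carrier G - {\<one>}) // R) \<ge> 2"
    and "\<And>x y. x \<noteq> y \<Longrightarrow> (x, y) \<in> R \<Longrightarrow> (y \<otimes> inv x, inv x) \<in> R"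
    and "z \<in> carrier G - {\<one>}"
    and "(z, inv z) \<in> R"
  shows "subgroup (R `` {z} \<union> {\<one>}) G \<and> R `` {z} \<union> {\<one>} \<noteq> carrier G"
proof -
  interpret comm_group G by fact
  note eq = assms(3)
  have Rsub: "R \<subseteq> (carrier G - {\<one>}) \<times> (carrier G - {\<one>})" using eq by (auto simp: equiv_def refl_on_def)
  have symR: "\<And>a b. (a,b) \<in> R \<Longrightarrow> (b,a) \<in> R" using eq by (meson equivE symD)
  have trR: "\<And>a b c. (a,b) \<in> R \<Longrightarrow> (b,c) \<in> R \<Longrightarrow> (a,c) \<in> R" using eq by (meson equivE transD)
  have zc: "z \<in> carrier G" "z \<noteq> \<one>" using assms(6) by auto
  define C where "C = R `` {z}"
  have memC: "\<And>a. a \<in> C \<longleftrightarrow> (z,a) \<in> R" by (simp add: C_def)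
  have Ccar: "\<And>a. a \<in> C \<Longrightarrow> a \<in> carrier G \<and> a \<noteq> \<one>" using Rsub memC by blast
  have invC: "inv x \<in> C" if x: "x \<in> C" for x
  proof (cases "x = z")
    case True then show ?thesis using assms(7) memC by simp
  next
    case False
    have xc: "x \<in> carrier G" using Ccar x by blast
    have "(z, x) \<in> R" using x memC by simp
    from assms(5)[OF _ this] False have "(x \<otimes> inv z, inv z) \<in> R" by auto
    hence x1: "(z, x \<otimes> inv z) \<in> R" using assms(7) symR trR by blast
    have ne: "x \<noteq> x \<otimes> inv z"
    proof
      assume "x = x \<otimes> inv z"
      hence "x \<otimes> \<one> = x \<otimes> inv z" using xc by simp
      hence "\<one> = inv z" using xc zc l_cancel by (metis inv_closed one_closed)
      thus False using zc by (metis inv_one inv_inv one_closed)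
    qed
    have "(x, x \<otimes> inv z) \<in> R" using x1 memC x symR trR by blast
    from assms(5)[OF ne this] have "(x \<otimes> inv z \<otimes> inv x, inv x) \<in> R" .
    moreover have "x \<otimes> inv z \<otimes> inv x = inv z" using xc zc
      by (metis inv_closed m_assoc m_comm r_inv r_one)
    ultimately have "(inv z, inv x) \<in> R" by simp
    then show ?thesis using assms(7) trR memC by blast
  qed
  have mulC: "x \<otimes> y \<in> C \<union> {\<one>}" if x: "x \<in> C" and y: "y \<in> C" for x y
  proof (cases "x \<otimes> y = \<one>")
    case True thus ?thesis by simp
  next
    case False
    have xc: "x \<in> carrier G" and yc: "y \<in> carrier G" using Ccar x y by auto
    have iy: "inv y \<in> C" using invC y by blast
    have ne: "x \<noteq> inv y" using False xc yc by auto
    have "(x, inv y) \<in> R" using x iy memC symR trR by blast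
    from assms(5)[OF ne this] have "(inv y \<otimes> inv x, inv x) \<in> R" .
    hence "inv y \<otimes> inv x \<in> C" using invC[OF x] memC symR trR by blast
    hence "inv (inv y \<otimes> inv x) \<in> C" by (rule invC)
    moreover have "inv (inv y \<otimes> inv x) = x \<otimes> y" using xc yc
      by (simp add: inv_mult_group)
    ultimately show ?thesis by simp
  qed
  have sg: "subgroup (C \<union> {\<one>}) G"
  proof
    show "C \<union> {\<one>} \<subseteq> carrier G" using Ccar by auto
    show "\<one> \<in> C \<union> {\<one>}" by simp
    show "\<And>x y. x \<in> C \<union> {\<one>} \<Longrightarrow> y \<in> C \<union> {\<one>} \<Longrightarrow> x \<otimes> y \<in> C \<union> {\<one>}"
      using mulC Ccar by auto
    show "\<And>x. x \<in> C \<union> {\<one>} \<Longrightarrow> inv x \<in> C \<union> {\<one>}" using invC by auto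
  qed
  have "C \<in> (carrier G - {\<one>}) // R" unfolding C_def using assms(6) by (rule quotientI)
  moreover obtain D where D: "D \<in> (carrier G - {\<one>}) // R" "D \<noteq> C"
  proof -
    have "\<not> (carrier G - {\<one>}) // R \<subseteq> {C}"
    proof
      assume "(carrier G - {\<one>}) // R \<subseteq> {C}"
      hence "card ((carrier G - {\<one>}) // R) \<le> 1" using card_mono[of "{C}"] by fastforce
      thus False using assms(4) by simp
    qed
    thus ?thesis using that by blast
  qed
  ultimately have "C \<inter> D = {}" using eq quotient_disj by blast
  moreover obtain d where "d \<in> D" using D(1) eq by (metis equals0I in_quotient_imp_non_empty)
  moreover have "D \<subseteq> carrier G - {\<one>}" using D(1) eq by (meson in_quotient_imp_subset)
  ultimately have "d \<in> carrier G" "d \<notin> C \<union> {\<one>}" by auto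
  hence "C \<union> {\<one>} \<noteq> carrier G" by blast
  with sg show ?thesis by (simp add: C_def)
qed

end
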